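(* Let $\alpha,\kappa>0$, $\beta\in\mathbb R$ and $\varepsilon,\nu\geqslant0$. The ordinary differential equation $$\ddot\tau=\frac{2\kappa}{\tau}+\frac{\varepsilon^2}{\tau^3}-\nu\frac{\dot\tau}{\tau^2},\qquad\tau(0)=\alpha,\quad\dot\tau(0)=\beta,$$ has a unique solution $\tau\in C^2(0,\infty)$, and it satisfies, as $t\to\infty$, $\tau(t)\sim 2t\sqrt{\kappa\ln t}$ and $\dot\tau(t)\sim2\sqrt{\kappa\ln t}$. *)

theory Defs
  imports "HOL-Analysis.Analysis" "HOL-Library.Landau_Symbols"
begin

definition is_ivp_solution ::
  "real \<Rightarrow> real \<Rightarrow> real \<Rightarrow> real \<Rightarrow> real \<Rightarrow> (real \<Rightarrow> real) \<Rightarrow> (real \<Rightarrow> real) \<Rightarrow> bool" where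
  "is_ivp_solution \<alpha> \<beta> \<kappa> \<epsilon> \<nu> \<tau> \<tau>' \<longleftrightarrow>
     \<tau> 0 = \<alpha> \<and> \<tau>' 0 = \<beta> \<and>
     (\<forall>t\<ge>0. \<tau> t \<noteq> 0) \<and>
     (\<forall>t\<ge>0. (\<tau> has_real_derivative \<tau>' t) (at t within {0..})) \<and>
     (\<forall>t\<ge>0. (\<tau>' has_real_derivative
         (2 * \<kappa> / \<tau> t + \<epsilon>^2 / (\<tau> t)^3 - \<nu> * \<tau>' t / (\<tau> t)^2)) (at t within {0..}))"

end

theory Submission
  imports Defs "HOL-Real_Asymp.Real_Asymp"
begin

lemma integral_poly:
  fixes t :: real assumes "t \<ge> 0"
  shows "((\<lambda>s. s^n) has_integral t^(Suc n) / real (Suc n)) {0..t}"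
proof -
  have "((\<lambda>s. s^n) has_integral ((\<lambda>s. s^Suc n / real (Suc n)) t - (\<lambda>s. s^Suc n / real (Suc n)) 0)) {0..t}"
  proof (rule fundamental_theorem_of_calculus[OF assms])
    fix x :: real
    have "((\<lambda>s. s^Suc n / real (Suc n)) has_real_derivative x^n) (at x within {0..t})"
      using DERIV_cdivide[OF has_field_derivative_at_within[OF DERIV_pow[of "Suc n" x]], of "real (Suc n)" "{0..t}"]
      by simp
    then show "((\<lambda>s. s^Suc n / real (Suc n)) has_vector_derivative x^n) (at x within {0..t})"
      by (simp add: has_real_derivative_iff_has_vector_derivative)
  qed
  then show ?thesis by simp
qed

lemma iter_bound:
  fixes d :: "nat \<Rightarrow> real \<Rightarrow> real"
  assumes L: "L \<ge> 0"
  and cont: "\<And>n. continuous_on {0..T} (d n)"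
  and d0: "\<And>t. t \<in> {0..T} \<Longrightarrow> d 0 t \<le> D"
  and step: "\<And>n t. t \<in> {0..T} \<Longrightarrow> d (Suc n) t \<le> L * integral {0..t} (d n)"
  shows "t \<in> {0..T} \<Longrightarrow> d n t \<le> D * (L*t)^n / fact n"
proof (induction n arbitrary: t)
  case 0 then show ?case using d0 by simp
next
  case (Suc n)
  have t: "0 \<le> t" "t \<le> T" using Suc.prems by auto
  have int1: "d n integrable_on {0..t}"
    by (rule integrable_continuous_real, rule continuous_on_subset[OF cont]) (use t in auto)
  have hi: "((\<lambda>s. D * L^n / fact n * s^n) has_integral D * L^n / fact n * (t^Suc n / real (Suc n))) {0..t}"
    by (rule has_integral_mult_right, rule integral_poly[OF t(1)])
  have "integral {0..t} (d n) \<le> integral {0..t} (\<lambda>s. D * L^n / fact n * s^n)"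
  proof (rule integral_le[OF int1])
    show "(\<lambda>s. D * L^n / fact n * s^n) integrable_on {0..t}" using hi by blast
    fix x assume "x \<in> {0..t}"
    then have "d n x \<le> D * (L*x)^n / fact n" using Suc.IH t by auto
    then show "d n x \<le> D * L^n / fact n * x^n" by (simp add: power_mult_distrib)
  qed
  also have "\<dots> = D * L^n / fact n * (t^Suc n / real (Suc n))" using hi by (rule integral_unique)
  finally have "L * integral {0..t} (d n) \<le> L * (D * L^n / fact n * (t^Suc n / real (Suc n)))"
    using L by (rule mult_left_mono)
  moreover have "L * (D * L^n / fact n * (t^Suc n / real (Suc n))) = D * (L*t)^Suc n / fact (Suc n)"
    by (simp add: field_simps power_mult_distrib)
  ultimately show ?case using step[of t n, OF Suc.prems] by linarith
qed

lemma cont_comp2: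
  assumes "continuous_on UNIV (\<lambda>z. f (fst z) (snd z))" "continuous_on S x" "continuous_on S y"
  shows "continuous_on S (\<lambda>s. f (x s) (y s))"
  using continuous_on_compose2[OF assms(1) continuous_on_Pair[OF assms(2,3)]] by auto

definition ctn :: "(real \<Rightarrow> real) \<Rightarrow> bool" where
  "ctn x \<longleftrightarrow> (\<forall>T. continuous_on {0..T} x)"

lemma ctn_int: assumes "ctn g" shows "ctn (\<lambda>t. c + integral {0..t} g)"
  unfolding ctn_def
proof
  fix T
  have "continuous_on {0..T} (\<lambda>t. integral {0..t} g)"
    by (rule indefinite_integral_continuous_1, rule integrable_continuous_real)
       (use assms in \<open>auto simp: ctn_def\<close>)
  then show "continuous_on {0..T} (\<lambda>t. c + integral {0..t} g)"
    by (intro continuous_intros)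
qed

locale picard =
  fixes f1 f2 :: "real \<Rightarrow> real \<Rightarrow> real" and L x0 y0 :: real
  assumes L: "L \<ge> 0"
  and lip1: "\<And>a b a' b'. \<bar>f1 a b - f1 a' b'\<bar> \<le> L * (\<bar>a - a'\<bar> + \<bar>b - b'\<bar>)"
  and lip2: "\<And>a b a' b'. \<bar>f2 a b - f2 a' b'\<bar> \<le> L * (\<bar>a - a'\<bar> + \<bar>b - b'\<bar>)"
  and c1: "continuous_on UNIV (\<lambda>z. f1 (fst z) (snd z))"
  and c2: "continuous_on UNIV (\<lambda>z. f2 (fst z) (snd z))"
begin

definition pop :: "(real\<Rightarrow>real)\<times>(real\<Rightarrow>real) \<Rightarrow> (real\<Rightarrow>real)\<times>(real\<Rightarrow>real)" where
  "pop p = ((\<lambda>t. x0 + integral {0..t} (\<lambda>s. f1 (fst p s) (snd p s))),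
            (\<lambda>t. y0 + integral {0..t} (\<lambda>s. f2 (fst p s) (snd p s))))"

definition "pctn p \<longleftrightarrow> ctn (fst p) \<and> ctn (snd p)"

lemma ctn_f1: "ctn x \<Longrightarrow> ctn y \<Longrightarrow> ctn (\<lambda>s. f1 (x s) (y s))"
  unfolding ctn_def using cont_comp2[OF c1] by blast
lemma ctn_f2: "ctn x \<Longrightarrow> ctn y \<Longrightarrow> ctn (\<lambda>s. f2 (x s) (y s))"
  unfolding ctn_def using cont_comp2[OF c2] by blast

lemma pop_ctn: "pctn p \<Longrightarrow> pctn (pop p)"
  unfolding pctn_def pop_def by (auto intro!: ctn_int ctn_f1 ctn_f2)

lemma ctn_int_on: "ctn g \<Longrightarrow> t \<ge> 0 \<Longrightarrow> g integrable_on {0..t}"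
  unfolding ctn_def by (blast intro: integrable_continuous_real)

lemma int_diff_bound:
  assumes "ctn x" "ctn y" "ctn x'" "ctn y'" "t \<ge> 0"
    and lip: "\<And>a b a' b'. \<bar>f a b - f a' b'\<bar> \<le> L * (\<bar>a - a'\<bar> + \<bar>b - b'\<bar>)"
    and cf: "continuous_on UNIV (\<lambda>z. f (fst z) (snd z))"
  shows "\<bar>integral {0..t} (\<lambda>s. f (x s) (y s)) - integral {0..t} (\<lambda>s. f (x' s) (y' s))\<bar>
     \<le> L * integral {0..t} (\<lambda>s. \<bar>x s - x' s\<bar> + \<bar>y s - y' s\<bar>)"
proof -
  have cf': "ctn x \<Longrightarrow> ctn y \<Longrightarrow> ctn (\<lambda>s. f (x s) (y s))" for x y
    unfolding ctn_def using cont_comp2[OF cf] by blast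
  have i1: "(\<lambda>s. f (x s) (y s)) integrable_on {0..t}" "(\<lambda>s. f (x' s) (y' s)) integrable_on {0..t}"
    using assms cf' ctn_int_on by auto
  have cd: "ctn (\<lambda>s. \<bar>x s - x' s\<bar> + \<bar>y s - y' s\<bar>)"
    using assms unfolding ctn_def by (auto intro!: continuous_intros)
  have i2: "(\<lambda>s. \<bar>x s - x' s\<bar> + \<bar>y s - y' s\<bar>) integrable_on {0..t}"
    using cd ctn_int_on assms by auto
  have "integral {0..t} (\<lambda>s. f (x s) (y s)) - integral {0..t} (\<lambda>s. f (x' s) (y' s))
     = integral {0..t} (\<lambda>s. f (x s) (y s) - f (x' s) (y' s))"
    using integral_diff[OF i1] by simp
  also have "\<bar>\<dots>\<bar> \<le> integral {0..t} (\<lambda>s. L * (\<bar>x s - x' s\<bar> + \<bar>y s - y' s\<bar>))"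
    using integral_norm_bound_integral[OF integrable_diff[OF i1] integrable_cmul[OF i2, of L]] lip
    by (simp add: real_norm_def)
  also have "\<dots> = L * integral {0..t} (\<lambda>s. \<bar>x s - x' s\<bar> + \<bar>y s - y' s\<bar>)"
    by simp
  finally show ?thesis .
qed

lemma pop_diff:
  assumes "pctn p" "pctn q" "t \<ge> 0"
  shows "\<bar>fst (pop p) t - fst (pop q) t\<bar> + \<bar>snd (pop p) t - snd (pop q) t\<bar>
     \<le> (2*L) * integral {0..t} (\<lambda>s. \<bar>fst p s - fst q s\<bar> + \<bar>snd p s - snd q s\<bar>)"
  using int_diff_bound[of "fst p" "snd p" "fst q" "snd q" t f1, OF _ _ _ _ _ lip1 c1]
    int_diff_bound[of "fst p" "snd p" "fst q" "snd q" t f2, OF _ _ _ _ _ lip2 c2] assms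
  unfolding pop_def pctn_def by auto

lemma summable_expD: "summable (\<lambda>n. D * c^n / fact n :: real)"
proof -
  have "summable (\<lambda>n. D * (inverse (fact n) * c^n))"
    by (rule summable_mult, rule summable_exp)
  then show ?thesis by (simp add: divide_inverse mult_ac)
qed

definition it :: "nat \<Rightarrow> (real\<Rightarrow>real)\<times>(real\<Rightarrow>real)" where
  "it n = (pop ^^ n) (\<lambda>_. x0, \<lambda>_. y0)"

lemma it_Suc: "it (Suc n) = pop (it n)" by (simp add: it_def)
lemma it_0: "it 0 = (\<lambda>_. x0, \<lambda>_. y0)" by (simp add: it_def)
lemma it_ctn: "pctn (it n)"
proof (induction n)
  case 0 then show ?case by (simp add: it_0 pctn_def ctn_def)
next
  case (Suc n) then show ?case by (simp add: it_Suc pop_ctn)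
qed

definition dd :: "nat \<Rightarrow> real \<Rightarrow> real" where
  "dd n t = \<bar>fst (it (Suc n)) t - fst (it n) t\<bar> + \<bar>snd (it (Suc n)) t - snd (it n) t\<bar>"

lemma dd_ctn: "continuous_on {0..T} (dd n)"
proof -
  have "pctn (it n)" "pctn (it (Suc n))" by (rule it_ctn)+
  then show ?thesis unfolding dd_def[abs_def] pctn_def ctn_def
    by (auto intro!: continuous_intros)
qed

lemma it_bound:
  assumes T: "T \<ge> 0"
  obtains D where "D \<ge> 0" "\<And>n t. t \<in> {0..T} \<Longrightarrow> dd n t \<le> D * (2*L*T)^n / fact n"
proof -
  obtain t0 where "t0 \<in> {0..T}" "\<forall>t\<in>{0..T}. dd 0 t \<le> dd 0 t0"
    using continuous_attains_sup[of "{0..T}" "dd 0"] dd_ctn T by fastforce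
  then have D0: "\<forall>t\<in>{0..T}. dd 0 t \<le> max (dd 0 t0) 0" by auto
  define D where "D = max (dd 0 t0) 0"
  have 1: "dd n t \<le> D * (2*L*t)^n / fact n" if "t \<in> {0..T}" for n t
  proof (rule iter_bound[where d=dd and L="2*L" and T=T])
    show "0 \<le> 2*L" using L by simp
    show "continuous_on {0..T} (dd n)" for n by (rule dd_ctn)
    show "dd 0 t \<le> D" if "t \<in> {0..T}" for t using D0 that D_def by auto
    show "dd (Suc n) t \<le> 2 * L * integral {0..t} (dd n)" if "t \<in> {0..T}" for n t
      using pop_diff[OF it_ctn it_ctn, of t "Suc n" n] that unfolding dd_def it_Suc[of "Suc n"] it_Suc[of n]
      by (simp add: dd_def[abs_def] it_Suc)
    show "t \<in> {0..T}" by fact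
  qed
  have 2: "D * (2*L*t)^n / fact n \<le> D * (2*L*T)^n / fact n" if "t \<in> {0..T}" for n t
  proof -
    have "(2*L*t)^n \<le> (2*L*T)^n" using that L by (intro power_mono mult_left_mono) auto
    then show ?thesis using D_def by (intro divide_right_mono mult_left_mono) auto
  qed
  show ?thesis
  proof (rule that[of D])
    show "0 \<le> D" using D_def by simp
    fix n t assume "t \<in> {0..T}"
    then show "dd n t \<le> D * (2*L*T)^n / fact n" using 1[of t n] 2[of t n] by linarith
  qed
qed

definition XX where "XX t = x0 + (\<Sum>k. fst (it (Suc k)) t - fst (it k) t)"
definition YY where "YY t = y0 + (\<Sum>k. snd (it (Suc k)) t - snd (it k) t)"

lemma it_unif:
  assumes T: "T \<ge> 0"
  shows "uniform_limit {0..T} (\<lambda>n. fst (it n)) XX sequentially"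
    "uniform_limit {0..T} (\<lambda>n. snd (it n)) YY sequentially"
proof -
  obtain D where D: "D \<ge> 0" "\<And>n t. t \<in> {0..T} \<Longrightarrow> dd n t \<le> D * (2*L*T)^n / fact n"
    using it_bound[OF T] by blast
  have sm: "summable (\<lambda>n. D * (2*L*T)^n / fact n)" by (rule summable_expD)
  have u1: "uniform_limit {0..T} (\<lambda>n t. \<Sum>k<n. fst (it (Suc k)) t - fst (it k) t)
       (\<lambda>t. \<Sum>k. fst (it (Suc k)) t - fst (it k) t) sequentially"
  proof (rule Weierstrass_m_test[OF _ sm])
    fix n t assume "t \<in> {0..T}"
    then show "norm (fst (it (Suc n)) t - fst (it n) t) \<le> D * (2*L*T)^n / fact n"
      using D(2)[of t n] unfolding dd_def by simp
  qed
  have u2: "uniform_limit {0..T} (\<lambda>n t. \<Sum>k<n. snd (it (Suc k)) t - snd (it k) t)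
       (\<lambda>t. \<Sum>k. snd (it (Suc k)) t - snd (it k) t) sequentially"
  proof (rule Weierstrass_m_test[OF _ sm])
    fix n t assume "t \<in> {0..T}"
    then show "norm (snd (it (Suc n)) t - snd (it n) t) \<le> D * (2*L*T)^n / fact n"
      using D(2)[of t n] unfolding dd_def by simp
  qed
  have "uniform_limit {0..T} (\<lambda>n t. x0 + (\<Sum>k<n. fst (it (Suc k)) t - fst (it k) t)) XX sequentially"
    using uniform_limit_add[OF uniform_limit_const u1, of "\<lambda>_. x0"] unfolding XX_def[abs_def] by simp
  then show "uniform_limit {0..T} (\<lambda>n. fst (it n)) XX sequentially"
    by (rule iffD1[OF uniform_limit_cong', rotated 2])
       (auto simp: sum_lessThan_telescope[of "\<lambda>k. fst (it k) x" for x] it_0)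
  have "uniform_limit {0..T} (\<lambda>n t. y0 + (\<Sum>k<n. snd (it (Suc k)) t - snd (it k) t)) YY sequentially"
    using uniform_limit_add[OF uniform_limit_const u2, of "\<lambda>_. y0"] unfolding YY_def[abs_def] by simp
  then show "uniform_limit {0..T} (\<lambda>n. snd (it n)) YY sequentially"
    by (rule iffD1[OF uniform_limit_cong', rotated 2])
       (auto simp: sum_lessThan_telescope[of "\<lambda>k. snd (it k) x" for x] it_0)
qed

lemma XY_ctn: "ctn XX" "ctn YY"
  unfolding ctn_def
proof -
  show "\<forall>T. continuous_on {0..T} XX"
  proof
    fix T :: real
    show "continuous_on {0..T} XX"
    proof (cases "T \<ge> 0")
      case True
      show ?thesis
        by (rule uniform_limit_theorem[OF _ it_unif(1)[OF True]])
           (use it_ctn in \<open>auto simp: pctn_def ctn_def\<close>)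
    qed simp
  qed
  show "\<forall>T. continuous_on {0..T} YY"
  proof
    fix T :: real
    show "continuous_on {0..T} YY"
    proof (cases "T \<ge> 0")
      case True
      show ?thesis
        by (rule uniform_limit_theorem[OF _ it_unif(2)[OF True]])
           (use it_ctn in \<open>auto simp: pctn_def ctn_def\<close>)
    qed simp
  qed
qed

lemma limit_eq:
  fixes f :: "real \<Rightarrow> real \<Rightarrow> real" and t :: real
  assumes ua: "uniform_limit {0..t} a A sequentially"
    and ub: "uniform_limit {0..t} b B sequentially"
    and uc: "uniform_limit {0..t} c C sequentially"
    and t: "t \<ge> 0"
    and rec: "\<And>n. c (Suc n) t = z0 + integral {0..t} (\<lambda>s. f (a n s) (b n s))"
    and ca: "\<And>n. continuous_on {0..t} (a n)" and cb: "\<And>n. continuous_on {0..t} (b n)"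
    and lip: "\<And>a b a' b'. \<bar>f a b - f a' b'\<bar> \<le> L * (\<bar>a - a'\<bar> + \<bar>b - b'\<bar>)"
    and cf: "continuous_on UNIV (\<lambda>z. f (fst z) (snd z))"
  shows "C t = z0 + integral {0..t} (\<lambda>s. f (A s) (B s))"
proof -
  have uf: "uniform_limit {0..t} (\<lambda>n s. f (a n s) (b n s)) (\<lambda>s. f (A s) (B s)) sequentially"
  proof (rule uniform_limitI)
    fix e :: real assume e: "e > 0"
    define e' where "e' = e / (2*L+1)"
    have e': "e' > 0" using e L by (simp add: e'_def)
    have le: "L * (2*e') < e"
    proof -
      have "L * (2*e') = e * (2*L) / (2*L+1)" using L by (simp add: e'_def field_simps)
      also have "\<dots> < e" using e L by (simp add: field_simps)
      finally show ?thesis .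
    qed
    show "\<forall>\<^sub>F n in sequentially. \<forall>s\<in>{0..t}. dist (f (a n s) (b n s)) (f (A s) (B s)) < e"
      using uniform_limitD[OF ua e'] uniform_limitD[OF ub e']
    proof eventually_elim
      case (elim n)
      show ?case
      proof
        fix s assume s: "s \<in> {0..t}"
        have "dist (f (a n s) (b n s)) (f (A s) (B s)) \<le> L * (\<bar>a n s - A s\<bar> + \<bar>b n s - B s\<bar>)"
          using lip by (simp add: dist_real_def)
        also have "\<dots> \<le> L * (2*e')"
        proof -
          have "\<bar>a n s - A s\<bar> < e'" "\<bar>b n s - B s\<bar> < e'"
            using elim s by (auto simp: dist_real_def)
          then show ?thesis using L by (intro mult_left_mono) auto
        qed
        finally show "dist (f (a n s) (b n s)) (f (A s) (B s)) < e" using le by linarith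
      qed
    qed
  qed
  have cfn: "continuous_on {0..t} (\<lambda>s. f (a n s) (b n s))" for n
    by (rule cont_comp2[OF cf ca cb])
  obtain I J where IJ: "\<And>n. ((\<lambda>s. f (a n s) (b n s)) has_integral I n) {0..t}"
      "((\<lambda>s. f (A s) (B s)) has_integral J) {0..t}" "I \<longlonglongrightarrow> J"
  proof (rule uniform_limit_integral[OF uf])
    show "continuous_on {0..t} (\<lambda>s. f (a n s) (b n s))" for n by (rule cfn)
  qed (auto simp del: atLeastAtMost_iff)
  have l1: "(\<lambda>n. c (Suc n) t) \<longlonglongrightarrow> z0 + J"
  proof -
    have "integral {0..t} (\<lambda>s. f (a n s) (b n s)) = I n" for n using IJ(1) by (rule integral_unique)
    then show ?thesis unfolding rec using IJ(3) by (auto intro!: tendsto_intros)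
  qed
  have l2: "(\<lambda>n. c (Suc n) t) \<longlonglongrightarrow> C t"
    using LIMSEQ_Suc[OF tendsto_uniform_limitI[OF uc]] t by auto
  have "C t = z0 + J" using LIMSEQ_unique[OF l2 l1] .
  then show ?thesis using IJ(2) by (simp add: integral_unique)
qed

lemma XY_sol:
  assumes t: "t \<ge> 0"
  shows "XX t = x0 + integral {0..t} (\<lambda>s. f1 (XX s) (YY s))"
    "YY t = y0 + integral {0..t} (\<lambda>s. f2 (XX s) (YY s))"
proof -
  have ca: "continuous_on {0..t} (fst (it n))" "continuous_on {0..t} (snd (it n))" for n
    using it_ctn[of n] by (auto simp: pctn_def ctn_def)
  show "XX t = x0 + integral {0..t} (\<lambda>s. f1 (XX s) (YY s))"
    by (rule limit_eq[OF it_unif(1)[OF t] it_unif(2)[OF t] it_unif(1)[OF t] t _ ca lip1 c1])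
       (simp add: it_Suc pop_def)
  show "YY t = y0 + integral {0..t} (\<lambda>s. f2 (XX s) (YY s))"
    by (rule limit_eq[OF it_unif(1)[OF t] it_unif(2)[OF t] it_unif(2)[OF t] t _ ca lip2 c2])
       (simp add: it_Suc pop_def)
qed

lemma uniq:
  assumes p: "pctn p" and q: "pctn q"
    and fp: "\<And>t. t \<ge> 0 \<Longrightarrow> fst p t = fst (pop p) t \<and> snd p t = snd (pop p) t"
    and fq: "\<And>t. t \<ge> 0 \<Longrightarrow> fst q t = fst (pop q) t \<and> snd q t = snd (pop q) t"
    and t: "t \<ge> 0"
  shows "fst p t = fst q t \<and> snd p t = snd q t"
proof -
  define d where "d s = \<bar>fst p s - fst q s\<bar> + \<bar>snd p s - snd q s\<bar>" for s
  have cd: "continuous_on {0..t} d"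
    using p q unfolding d_def[abs_def] pctn_def ctn_def by (auto intro!: continuous_intros)
  obtain t0 where "t0 \<in> {0..t}" "\<forall>s\<in>{0..t}. d s \<le> d t0"
    using continuous_attains_sup[of "{0..t}" d] cd t by fastforce
  then have D0: "\<forall>s\<in>{0..t}. d s \<le> d t0" by auto
  have st: "d s \<le> 2*L * integral {0..s} d" if "s \<in> {0..t}" for s
    using pop_diff[OF p q, of s] fp[of s] fq[of s] that unfolding d_def[abs_def] by auto
  have b: "d t \<le> d t0 * (2*L*t)^n / fact n" for n
  proof (rule iter_bound[where d="\<lambda>_. d" and L="2*L" and T=t])
    show "0 \<le> 2*L" using L by simp
    show "continuous_on {0..t} d" by (rule cd)
    show "d s \<le> d t0" if "s \<in> {0..t}" for s using D0 that by blast
    show "d s \<le> 2*L * integral {0..s} d" if "s \<in> {0..t}" for s using st that by blast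
    show "t \<in> {0..t}" using t by simp
  qed
  have "(\<lambda>n. d t0 * (2*L*t)^n / fact n) \<longlonglongrightarrow> 0"
    by (rule summable_LIMSEQ_zero[OF summable_expD])
  then have "d t \<le> 0"
    using b by (intro tendsto_le[OF trivial_limit_sequentially _ tendsto_const]) auto
  then show ?thesis unfolding d_def by auto
qed

end


definition psi :: "real \<Rightarrow> real \<Rightarrow> real" where "psi m z = 1 / max z m"

lemma psi_pos: "m > 0 \<Longrightarrow> psi m z > 0" by (simp add: psi_def)
lemma psi_le: "m > 0 \<Longrightarrow> psi m z \<le> 1/m" by (simp add: psi_def frac_le)
lemma psi_eq: "z \<ge> m \<Longrightarrow> psi m z = 1 / z" by (simp add: psi_def)

lemma psi_lip:
  assumes m: "m > 0"
  shows "\<bar>psi m a - psi m b\<bar> \<le> \<bar>a - b\<bar> / m^2"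
proof -
  define x y where "x = max a m" "y = max b m"
  have xy: "x \<ge> m" "y \<ge> m" using x_y_def by auto
  have num: "\<bar>y - x\<bar> \<le> \<bar>a - b\<bar>" using x_y_def by auto
  have "psi m a - psi m b = (y - x) / (x*y)" using xy m by (simp add: psi_def x_y_def[symmetric] field_simps)
  then have "\<bar>psi m a - psi m b\<bar> = \<bar>y - x\<bar> / (x*y)" using xy m by (simp add: abs_div)
  also have "\<dots> \<le> \<bar>a - b\<bar> / (m*m)"
    using xy m num by (intro frac_le mult_mono) auto
  finally show ?thesis by (simp add: power2_eq_square)
qed

lemma cube_lip:
  fixes p q M :: real
  assumes "0 \<le> p" "p \<le> M" "0 \<le> q" "q \<le> M"
  shows "\<bar>p^3 - q^3\<bar> \<le> 3*M^2 * \<bar>p - q\<bar>"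
proof -
  have "p^3 - q^3 = (p - q) * (p^2 + p*q + q^2)" by (simp add: algebra_simps power2_eq_square power3_eq_cube)
  then have "\<bar>p^3 - q^3\<bar> = \<bar>p - q\<bar> * (p^2 + p*q + q^2)" using assms by (simp add: abs_mult)
  also have "\<dots> \<le> \<bar>p - q\<bar> * (3*M^2)"
  proof (rule mult_left_mono)
    have "p^2 \<le> M^2" "q^2 \<le> M^2" "p*q \<le> M*M" using assms by (auto intro!: power_mono mult_mono)
    then show "p^2 + p*q + q^2 \<le> 3*M^2" by (simp add: power2_eq_square)
  qed simp
  finally show ?thesis by (simp add: mult_ac)
qed

lemma psi_cont: "m > 0 \<Longrightarrow> continuous_on S f \<Longrightarrow> continuous_on S (\<lambda>z. psi m (f z))"
  unfolding psi_def by (intro continuous_intros) auto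

lemma psi_deriv:
  assumes "m > 0" "z > m"
  shows "(psi m has_real_derivative - (1 / z^2)) (at z)"
proof (rule has_field_derivative_transform_within_open[where S="{m<..}"])
  show "((\<lambda>x. inverse x) has_real_derivative - (1 / z^2)) (at z)"
    using DERIV_inverse[of z UNIV] assms by (simp add: power2_eq_square field_simps)
  show "x \<in> {m<..} \<Longrightarrow> inverse x = psi m x" for x by (simp add: psi_def field_simps)
qed (use assms in auto)

definition En :: "real \<Rightarrow> real \<Rightarrow> real \<Rightarrow> real \<Rightarrow> real" where
  "En \<kappa> \<epsilon> x v = v^2/2 - 2*\<kappa>*ln x + \<epsilon>^2/(2*x^2)"

lemma En_deriv0:
  assumes d1: "(\<tau> has_real_derivative u t) (at t)"
    and d2: "(u has_real_derivative U) (at t)"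
    and pos: "\<tau> t > 0"
  shows "((\<lambda>s. (u s)^2/2 - 2*\<kappa>*ln (\<tau> s) + \<epsilon>^2/(2*(\<tau> s)^2)) has_real_derivative
     (u t * U - 2*\<kappa>*(u t / \<tau> t) - \<epsilon>^2 * u t / (\<tau> t)^3)) (at t)"
proof -
  have a: "((\<lambda>s. (u s)^2/2) has_real_derivative (u t * U)) (at t)"
    using DERIV_cdivide[OF DERIV_mult[OF d2 d2], of 2] by (simp add: power2_eq_square mult.commute)
  have b: "((\<lambda>s. 2*\<kappa>*ln (\<tau> s)) has_real_derivative 2*\<kappa>*(u t / \<tau> t)) (at t)"
    using DERIV_cmult[OF DERIV_chain2[OF DERIV_ln[OF pos] d1], of "2*\<kappa>"] by (simp add: field_simps)
  have c0: "((\<lambda>s. inverse ((\<tau> s)^2)) has_real_derivative - (inverse ((\<tau> t)^2) * (2 * \<tau> t * u t) * inverse ((\<tau> t)^2))) (at t)"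
    by (rule DERIV_inverse'[OF _]) (use DERIV_mult[OF d1 d1] pos in \<open>auto simp: power2_eq_square mult_ac\<close>)
  have c: "((\<lambda>s. \<epsilon>^2/(2*(\<tau> s)^2)) has_real_derivative (- (\<epsilon>^2) * u t / (\<tau> t)^3)) (at t)"
    using DERIV_cmult[OF c0, of "\<epsilon>^2/2"] pos by (simp add: field_simps power2_eq_square power3_eq_cube)
  show ?thesis using DERIV_add[OF DERIV_diff[OF a b] c] by simp
qed

lemma En_deriv:
  assumes d1: "(\<tau> has_real_derivative u t) (at t)"
    and d2: "(u has_real_derivative (2*\<kappa>/\<tau> t + \<epsilon>^2/(\<tau> t)^3 - \<nu> * u t/(\<tau> t)^2)) (at t)"
    and pos: "\<tau> t > 0"
  shows "((\<lambda>s. En \<kappa> \<epsilon> (\<tau> s) (u s)) has_real_derivative (- \<nu> * (u t)^2/(\<tau> t)^2)) (at t)"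
proof -
  have "u t * (2*\<kappa>/\<tau> t + \<epsilon>^2/(\<tau> t)^3 - \<nu> * u t/(\<tau> t)^2) - 2*\<kappa>*(u t / \<tau> t) - \<epsilon>^2 * u t / (\<tau> t)^3
     = - \<nu> * (u t)^2/(\<tau> t)^2"
    using pos by (simp add: field_simps power2_eq_square power3_eq_cube)
  then show ?thesis using En_deriv0[OF d1 d2 pos, of \<kappa> \<epsilon>] unfolding En_def by simp
qed

lemma energy_le:
  assumes s: "0 \<le> s" and c1: "continuous_on {0..s} \<tau>" and c2: "continuous_on {0..s} u"
    and pos: "\<And>t. t \<in> {0..s} \<Longrightarrow> \<tau> t > 0"
    and d1: "\<And>t. 0 < t \<Longrightarrow> t < s \<Longrightarrow> (\<tau> has_real_derivative u t) (at t)"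
    and d2: "\<And>t. 0 < t \<Longrightarrow> t < s \<Longrightarrow>
       (u has_real_derivative (2*\<kappa>/\<tau> t + \<epsilon>^2/(\<tau> t)^3 - \<nu> * u t/(\<tau> t)^2)) (at t)"
    and nu: "\<nu> \<ge> 0"
  shows "En \<kappa> \<epsilon> (\<tau> s) (u s) \<le> En \<kappa> \<epsilon> (\<tau> 0) (u 0)"
proof (rule DERIV_nonpos_imp_decreasing_open[OF s])
  fix t assume t: "0 < t" "t < s"
  have "\<tau> t > 0" using pos t by auto
  then show "\<exists>y. ((\<lambda>s. En \<kappa> \<epsilon> (\<tau> s) (u s)) has_real_derivative y) (at t) \<and> y \<le> 0"
    using En_deriv[OF d1[OF t] d2[OF t]] nu
    by (intro exI[of _ "- \<nu> * (u t)^2/(\<tau> t)^2"]) (auto simp: divide_nonpos_pos)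
next
  show "continuous_on {0..s} (\<lambda>s. En \<kappa> \<epsilon> (\<tau> s) (u s))"
    unfolding En_def using pos
    by (intro continuous_intros c1 c2) (auto simp: less_imp_le dest: pos)
qed

lemma energy_lower:
  assumes s: "0 \<le> s" and c1: "continuous_on {0..s} \<tau>" and c2: "continuous_on {0..s} u"
    and pos: "\<And>t. t \<in> {0..s} \<Longrightarrow> \<tau> t > 0"
    and d1: "\<And>t. 0 < t \<Longrightarrow> t < s \<Longrightarrow> (\<tau> has_real_derivative u t) (at t)"
    and d2: "\<And>t. 0 < t \<Longrightarrow> t < s \<Longrightarrow>
       (u has_real_derivative (2*\<kappa>/\<tau> t + \<epsilon>^2/(\<tau> t)^3 - \<nu> * u t/(\<tau> t)^2)) (at t)"
    and nu: "\<nu> \<ge> 0" and k: "\<kappa> > 0"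
  shows "\<tau> s \<ge> exp (- En \<kappa> \<epsilon> (\<tau> 0) (u 0) / (2*\<kappa>))"
proof -
  have E: "En \<kappa> \<epsilon> (\<tau> s) (u s) \<le> En \<kappa> \<epsilon> (\<tau> 0) (u 0)" by (rule energy_le[OF assms(1-7)])
  have ps: "\<tau> s > 0" using pos s by auto
  have "- 2*\<kappa>*ln (\<tau> s) \<le> En \<kappa> \<epsilon> (\<tau> s) (u s)"
    unfolding En_def using ps by auto
  then have "- En \<kappa> \<epsilon> (\<tau> 0) (u 0) / (2*\<kappa>) \<le> ln (\<tau> s)"
    using E k by (simp add: field_simps)
  then have "exp (- En \<kappa> \<epsilon> (\<tau> 0) (u 0) / (2*\<kappa>)) \<le> exp (ln (\<tau> s))" by simp
  then show ?thesis using ps by simp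
qed

lemma deriv_int:
  fixes g :: "real \<Rightarrow> real"
  assumes g: "\<And>T. continuous_on {0..T} g" and t: "t \<ge> 0"
    and eq: "\<And>x. x \<ge> 0 \<Longrightarrow> f x = c + integral {0..x} g"
  shows "(f has_real_derivative g t) (at t within {0..})"
proof -
  have "((\<lambda>x. integral {0..x} g) has_vector_derivative g t) (at t within {0..t+1})"
    using integral_has_vector_derivative[OF g, of t "t+1"] t by simp
  then have "((\<lambda>x. integral {0..x} g) has_real_derivative g t) (at t within {0..t+1})"
    by (simp add: has_real_derivative_iff_has_vector_derivative)
  moreover have "at t within {0..t+1} = at t within {0..}"
    by (rule at_within_nhd[of t "{..<t+1}"]) auto
  ultimately have "((\<lambda>x. integral {0..x} g) has_real_derivative g t) (at t within {0..})" by simp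
  then have "((\<lambda>x. c + integral {0..x} g) has_real_derivative g t) (at t within {0..})"
    using DERIV_add[OF DERIV_const] by fastforce
  then show ?thesis
    by (rule has_field_derivative_transform_within[where d=1]) (use t eq in auto)
qed



lemma mono_helper:
  fixes f f' :: "real \<Rightarrow> real"
  assumes "a \<le> b" "continuous_on {a..b} f"
    "\<And>x. a < x \<Longrightarrow> x < b \<Longrightarrow> (f has_real_derivative f' x) (at x)"
    "\<And>x. a < x \<Longrightarrow> x < b \<Longrightarrow> f' x \<ge> 0"
  shows "f a \<le> f b"
  using DERIV_nonneg_imp_increasing_open[OF assms(1) _ assms(2)] assms(3,4) by blast

locale asy =
  fixes \<kappa> \<epsilon> \<nu> :: real and \<tau> u :: "real \<Rightarrow> real"
  assumes k: "\<kappa> > 0" and e: "\<epsilon> \<ge> 0" and nu: "\<nu> \<ge> 0"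
  and c1: "continuous_on {0..} \<tau>" and c2: "continuous_on {0..} u"
  and pos: "\<And>t. t \<ge> 0 \<Longrightarrow> \<tau> t > 0"
  and d1: "\<And>t. t > 0 \<Longrightarrow> (\<tau> has_real_derivative u t) (at t)"
  and d2: "\<And>t. t > 0 \<Longrightarrow> (u has_real_derivative (2*\<kappa>/\<tau> t + \<epsilon>^2/(\<tau> t)^3 - \<nu> * u t/(\<tau> t)^2)) (at t)"
begin

definition "E0 = En \<kappa> \<epsilon> (\<tau> 0) (u 0)"
definition "cc = exp (- E0/(2*\<kappa>))"

lemma c1': "a \<ge> 0 \<Longrightarrow> continuous_on {a..b} \<tau>"
  by (rule continuous_on_subset[OF c1]) auto
lemma c2': "a \<ge> 0 \<Longrightarrow> continuous_on {a..b} u"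
  by (rule continuous_on_subset[OF c2]) auto

lemma En_le: "t \<ge> 0 \<Longrightarrow> En \<kappa> \<epsilon> (\<tau> t) (u t) \<le> E0"
  unfolding E0_def by (rule energy_le[OF _ c1' c2' _ d1 d2 nu]) (auto intro: pos)

lemma tau_ge: "t \<ge> 0 \<Longrightarrow> \<tau> t \<ge> cc"
  unfolding cc_def E0_def by (rule energy_lower[OF _ c1' c2' _ d1 d2 nu k]) (auto intro: pos)

lemma cc_pos: "cc > 0" by (simp add: cc_def)

definition v where "v t = u t - \<nu> / \<tau> t" for t

lemma v_deriv: "t > 0 \<Longrightarrow> (v has_real_derivative (2*\<kappa>/\<tau> t + \<epsilon>^2/(\<tau> t)^3)) (at t)"
proof -
  assume t: "t > 0"
  have p: "\<tau> t \<noteq> 0" using pos[of t] t by auto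
  have "((\<lambda>s. u s - \<nu> * inverse (\<tau> s)) has_real_derivative
      (2*\<kappa>/\<tau> t + \<epsilon>^2/(\<tau> t)^3 - \<nu> * u t/(\<tau> t)^2) - \<nu> * (- (inverse (\<tau> t) * u t * inverse (\<tau> t)))) (at t)"
    by (rule DERIV_diff[OF d2[OF t] DERIV_cmult[OF DERIV_inverse'[OF d1[OF t] p]]])
  moreover have "(\<lambda>s. u s - \<nu> * inverse (\<tau> s)) = v" by (simp add: v_def[abs_def] divide_inverse)
  moreover have "(2*\<kappa>/\<tau> t + \<epsilon>^2/(\<tau> t)^3 - \<nu> * u t/(\<tau> t)^2) - \<nu> * (- (inverse (\<tau> t) * u t * inverse (\<tau> t)))
      = 2*\<kappa>/\<tau> t + \<epsilon>^2/(\<tau> t)^3" using p by (simp add: field_simps power2_eq_square)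
  ultimately show ?thesis by simp
qed

lemma tau_nz: "0 \<le> a \<Longrightarrow> a \<le> x \<Longrightarrow> \<tau> x \<noteq> 0"
  using pos[of x] by auto

lemma v_cont: "a \<ge> 0 \<Longrightarrow> continuous_on {a..b} v"
  unfolding v_def[abs_def] by (intro continuous_intros c1' c2') (auto simp: tau_nz)

lemma v_pos: "\<exists>t1>0. v t1 > 0"
proof (rule ccontr)
  assume "\<not> ?thesis"
  then have vneg: "\<And>t. t > 0 \<Longrightarrow> v t \<le> 0" by auto
  define C where "C = \<nu>/cc + 1"
  have C: "C > 0" using nu cc_pos by (simp add: C_def add_nonneg_pos)
  have uC: "u t \<le> C" if "t > 0" for t
  proof -
    have "\<nu>/\<tau> t \<le> \<nu>/cc" using tau_ge[of t] that cc_pos nu by (intro divide_left_mono) auto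
    then show ?thesis using vneg[OF that] unfolding v_def C_def by linarith
  qed
  define a where "a = \<tau> 0"
  have a: "a > 0" using pos a_def by auto
  have tle: "\<tau> t \<le> a + C*t" if "t \<ge> 0" for t
  proof -
    have "(\<lambda>s. a + C * s - \<tau> s) 0 \<le> (\<lambda>s. a + C * s - \<tau> s) t"
    proof (rule mono_helper[where f="\<lambda>s. a + C * s - \<tau> s" and f'="\<lambda>s. C - u s"])
      show "continuous_on {0..t} (\<lambda>s. a + C * s - \<tau> s)" by (auto intro!: continuous_intros c1')
      fix x assume x: "0 < x" "x < t"
      show "((\<lambda>s. a + C * s - \<tau> s) has_real_derivative C - u x) (at x)"
        using DERIV_diff[OF DERIV_add[OF DERIV_const DERIV_cmult[OF DERIV_ident]] d1[OF x(1)], of a C] by simp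
      show "C - u x \<ge> 0" using uC[OF x(1)] by simp
    qed (use that in auto)
    then show ?thesis using a_def by simp
  qed
  have vlow: "v t \<ge> v 0 + (2*\<kappa>/C)*(ln (a + C*t) - ln a)" if "t \<ge> 0" for t
  proof -
    have "(\<lambda>s. v s - (2*\<kappa>/C)*ln(a + C * s)) 0 \<le> (\<lambda>s. v s - (2*\<kappa>/C)*ln(a + C * s)) t"
    proof (rule mono_helper[where f="\<lambda>s. v s - (2*\<kappa>/C)*ln(a + C * s)" and f'="\<lambda>s. (2*\<kappa>/\<tau> s + \<epsilon>^2/(\<tau> s)^3) - (2*\<kappa>/C) * (C / (a + C * s))"])
      show "continuous_on {0..t} (\<lambda>s. v s - (2*\<kappa>/C)*ln(a + C * s))"
      proof -
        have apos: "a + C * x > 0" if "x \<ge> 0" for x using a C that by (simp add: add_pos_nonneg)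
        show ?thesis by (intro continuous_intros v_cont) (use apos in \<open>fastforce+\<close>)
      qed
      fix x assume x: "0 < x" "x < t"
      have ax: "a + C*x > 0" using a C x by (simp add: add_pos_pos)
      have "((\<lambda>s. a + C * s) has_real_derivative C) (at x)"
        using DERIV_add[OF DERIV_const DERIV_cmult[OF DERIV_ident], of a C] by simp
      from DERIV_chain2[OF DERIV_ln[OF ax] this]
      have "((\<lambda>s. ln (a + C * s)) has_real_derivative C / (a + C*x)) (at x)" by (simp add: field_simps)
      from DERIV_diff[OF v_deriv[OF x(1)] DERIV_cmult[OF this, of "2*\<kappa>/C"]]
      show "((\<lambda>s. v s - (2*\<kappa>/C)*ln(a + C * s)) has_real_derivative
          (2*\<kappa>/\<tau> x + \<epsilon>^2/(\<tau> x)^3) - (2*\<kappa>/C) * (C / (a + C*x))) (at x)" .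
      have px: "\<tau> x > 0" using pos x by auto
      have "2*\<kappa>/(a + C*x) \<le> 2*\<kappa>/\<tau> x" using tle[of x] x px k by (intro divide_left_mono) auto
      moreover have "\<epsilon>^2/(\<tau> x)^3 \<ge> 0" using px by simp
      moreover have "(2*\<kappa>/C) * (C / (a + C*x)) = 2*\<kappa>/(a + C*x)" using C by simp
      ultimately show "(2*\<kappa>/\<tau> x + \<epsilon>^2/(\<tau> x)^3) - (2*\<kappa>/C) * (C / (a + C*x)) \<ge> 0" by linarith
    qed (use that in auto)
    then show ?thesis by (simp add: algebra_simps)
  qed
  define K where "K = \<bar>v 0\<bar> * C/(2*\<kappa>) + 1"
  have Kp: "K > 0" using C k by (simp add: K_def add_nonneg_pos)
  define t where "t = a * exp K / C"
  have t: "t > 0" using a C by (simp add: t_def)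
  have "a + C*t = a * (1 + exp K)" using C by (simp add: t_def field_simps)
  then have "a * exp K \<le> a + C*t" using a by simp
  then have "ln (a * exp K) \<le> ln (a + C*t)" using a by (intro ln_mono) auto
  then have "ln a + K \<le> ln (a + C*t)" using a by (simp add: ln_mult)
  define q where "q = 2*\<kappa>/C"
  define P where "P = ln (a + C*t) - ln a"
  have qp: "q > 0" using k C by (simp add: q_def)
  have KP: "K \<le> P" using \<open>ln a + K \<le> ln (a + C*t)\<close> by (simp add: P_def)
  have 1: "q * K \<le> q * P" using qp KP by (intro mult_left_mono) auto
  have 2: "q * K = \<bar>v 0\<bar> + q" using k C by (simp add: q_def K_def field_simps)
  have 3: "v 0 + q * P \<le> v t" using vlow[of t, OF less_imp_le[OF t]] by (simp add: q_def P_def)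
  have 4: "v 0 + \<bar>v 0\<bar> \<ge> 0" by simp
  have "v t > 0" using 1 2 3 4 qp by linarith
  then show False using vneg[OF t] by simp
qed

lemma after:
  obtains t1 \<delta> where "t1 > 0" "\<delta> > 0" "\<And>t. t \<ge> t1 \<Longrightarrow> u t \<ge> \<delta>"
    "\<And>t. t \<ge> t1 \<Longrightarrow> \<tau> t \<ge> \<tau> t1 + \<delta>*(t - t1)"
proof -
  obtain t1 where t1: "t1 > 0" "v t1 > 0" using v_pos by auto
  define \<delta> where "\<delta> = v t1"
  have vge: "v t \<ge> \<delta>" if "t \<ge> t1" for t
    unfolding \<delta>_def
  proof (rule mono_helper[where f=v and a=t1 and b=t and f'="\<lambda>s. 2*\<kappa>/\<tau> s + \<epsilon>^2/(\<tau> s)^3"])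
    show "continuous_on {t1..t} v" using t1 by (intro v_cont) simp
    fix x assume x: "t1 < x" "x < t"
    show "(v has_real_derivative 2*\<kappa>/\<tau> x + \<epsilon>^2/(\<tau> x)^3) (at x)" using x t1 by (intro v_deriv) simp
    have px: "\<tau> x > 0" using pos x t1 by auto
    then show "2*\<kappa>/\<tau> x + \<epsilon>^2/(\<tau> x)^3 \<ge> 0" using k by simp
  qed (use that in auto)
  have uge: "u t \<ge> \<delta>" if "t \<ge> t1" for t
  proof -
    have "\<nu>/\<tau> t \<ge> 0" using nu pos[of t] that t1 by simp
    then show ?thesis using vge[OF that] unfolding v_def by linarith
  qed
  have tge: "\<tau> t \<ge> \<tau> t1 + \<delta>*(t - t1)" if "t \<ge> t1" for t
  proof -
    have "(\<lambda>s. \<tau> s - \<delta> * s) t1 \<le> (\<lambda>s. \<tau> s - \<delta> * s) t"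
    proof (rule mono_helper[where f="\<lambda>s. \<tau> s - \<delta> * s" and f'="\<lambda>s. u s - \<delta>"])
      show "continuous_on {t1..t} (\<lambda>s. \<tau> s - \<delta> * s)" using t1 by (auto intro!: continuous_intros c1')
      fix x assume x: "t1 < x" "x < t"
      show "((\<lambda>s. \<tau> s - \<delta> * s) has_real_derivative u x - \<delta>) (at x)"
        using DERIV_diff[OF d1 DERIV_cmult[OF DERIV_ident], of x \<delta>] x t1 by simp
      show "u x - \<delta> \<ge> 0" using uge[of x] x by simp
    qed (use that in auto)
    then show ?thesis by (simp add: algebra_simps)
  qed
  show ?thesis by (rule that[OF t1(1) _ uge tge]) (use t1 \<delta>_def in auto)
qed

lemma tau_top: "filterlim \<tau> at_top at_top"
proof -
  obtain t1 \<delta> where A: "t1 > 0" "\<delta> > 0" "\<And>t. t \<ge> t1 \<Longrightarrow> \<tau> t \<ge> \<tau> t1 + \<delta>*(t - t1)"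
    using after by metis
  show ?thesis unfolding filterlim_at_top
  proof
    fix Z :: real
    have "eventually (\<lambda>t. t \<ge> max t1 (t1 + (Z - \<tau> t1)/\<delta>)) at_top" by (rule eventually_ge_at_top)
    then show "eventually (\<lambda>t. Z \<le> \<tau> t) at_top"
    proof eventually_elim
      case (elim t)
      then have "\<delta>*(t - t1) \<ge> \<delta> * ((Z - \<tau> t1)/\<delta>)" using A(2) by (intro mult_left_mono) auto
      then have "\<delta>*(t - t1) \<ge> Z - \<tau> t1" using A(2) by simp
      then show ?case using A(3)[of t] elim by auto
    qed
  qed
qed

end


context asy begin

lemma usq: "t \<ge> 0 \<Longrightarrow> (u t)^2 \<le> 2*E0 + 4*\<kappa>*ln (\<tau> t)"
proof -
  assume t: "t \<ge> 0"
  have "\<epsilon>^2/(2*(\<tau> t)^2) \<ge> 0" by simp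
  then show ?thesis using En_le[OF t] unfolding En_def by linarith
qed

lemma u_bound:
  obtains t2 K where "t2 > 0" "\<And>t. t \<ge> t2 \<Longrightarrow> \<tau> t \<ge> 1 \<and> u t > 0 \<and> \<bar>(u t)^2 - 4*\<kappa>*ln (\<tau> t)\<bar> \<le> K"
proof -
  obtain t1 \<delta> where A: "t1 > 0" "\<delta> > 0" "\<And>t. t \<ge> t1 \<Longrightarrow> u t \<ge> \<delta>"
    using after by metis
  obtain N where N: "\<And>t. t \<ge> N \<Longrightarrow> \<tau> t \<ge> 1"
    using tau_top[unfolded filterlim_at_top, rule_format, of 1] unfolding eventually_at_top_linorder by blast
  define t2 where "t2 = max N t1"
  have t2: "t2 > 0" using A t2_def by auto
  have t2b: "\<tau> t \<ge> 1" "u t \<ge> \<delta>" "t > 0" if "t \<ge> t2" for t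
    using N A that t2_def by auto
  define A0 where "A0 = \<bar>2*E0\<bar>"
  define C1 where "C1 = 1 + A0"
  define C2 where "C2 = 4*\<kappa>"
  define gf where "gf x = (C1 + C2 + C2 * ln x)/x" for x
  define G where "G t = En \<kappa> \<epsilon> (\<tau> t) (u t) - \<nu> * gf (\<tau> t)" for t
  have uup: "u t \<le> C1 + C2 * ln (\<tau> t)" if "t \<ge> t2" for t
  proof -
    define X where "X = A0 + 4*\<kappa>*ln (\<tau> t)"
    have X: "X \<ge> 0" using t2b[OF that] k by (simp add: X_def A0_def)
    have uX: "(u t)^2 \<le> X" using usq[of t] t2b[OF that] by (simp add: X_def A0_def)
    show ?thesis
    proof (cases "u t \<le> 1")
      case True then show ?thesis using X by (simp add: C1_def C2_def X_def)
    next
      case False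
      then have "u t \<le> (u t)^2" by (simp add: power2_eq_square)
      then show ?thesis using uX by (simp add: C1_def C2_def X_def)
    qed
  qed
  have gfd: "(gf has_real_derivative -(C1 + C2 * ln x)/x^2) (at x)" if "x > 0" for x
    unfolding gf_def[abs_def]
    by (rule DERIV_cong[OF DERIV_divide[OF DERIV_add[OF DERIV_const DERIV_cmult[OF DERIV_ln[OF that]]] DERIV_ident]])
       (use that in \<open>auto simp: field_simps power2_eq_square\<close>)
  have Gmono: "G t2 \<le> G t" if "t \<ge> t2" for t
  proof (rule mono_helper[where f=G and a=t2 and b=t and
        f'="\<lambda>s. \<nu> * u s * (C1 + C2 * ln (\<tau> s) - u s)/(\<tau> s)^2"])
    show "continuous_on {t2..t} G"
      unfolding G_def[abs_def] gf_def[abs_def] En_def using t2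
      by (intro continuous_intros c1' c2') (auto simp: tau_nz; metis pos less_le_trans less_imp_le not_less)+
    fix x assume x: "t2 < x" "x < t"
    have x0: "x > 0" and px: "\<tau> x > 0" using x t2 pos[of x] by auto
    have "(G has_real_derivative (- \<nu> * (u x)^2/(\<tau> x)^2) - \<nu> * (-(C1 + C2 * ln (\<tau> x))/(\<tau> x)^2 * u x)) (at x)"
      unfolding G_def[abs_def]
      by (rule DERIV_diff[OF En_deriv[OF d1[OF x0] d2[OF x0] px] DERIV_cmult[OF DERIV_chain2[OF gfd[OF px] d1[OF x0]]]])
    moreover have "(- \<nu> * (u x)^2/(\<tau> x)^2) - \<nu> * (-(C1 + C2 * ln (\<tau> x))/(\<tau> x)^2 * u x)
        = \<nu> * u x * (C1 + C2 * ln (\<tau> x) - u x)/(\<tau> x)^2"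
      using px by (simp add: field_simps power2_eq_square)
    ultimately show "(G has_real_derivative \<nu> * u x * (C1 + C2 * ln (\<tau> x) - u x)/(\<tau> x)^2) (at x)" by simp
    have "u x \<ge> 0" using t2b[of x] x A(2) by auto
    moreover have "C1 + C2 * ln (\<tau> x) - u x \<ge> 0" using uup[of x] x by simp
    ultimately show "\<nu> * u x * (C1 + C2 * ln (\<tau> x) - u x)/(\<tau> x)^2 \<ge> 0" using nu by simp
  qed (use that in auto)
  have Elow: "En \<kappa> \<epsilon> (\<tau> t) (u t) \<ge> G t2" if "t \<ge> t2" for t
  proof -
    have "gf (\<tau> t) \<ge> 0" using t2b[OF that] k by (simp add: gf_def C1_def C2_def A0_def)
    then have "G t \<le> En \<kappa> \<epsilon> (\<tau> t) (u t)" using nu by (simp add: G_def)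
    then show ?thesis using Gmono[OF that] by simp
  qed
  define K where "K = \<bar>2*E0\<bar> + \<bar>2 * G t2\<bar> + \<epsilon>^2"
  show ?thesis
  proof (rule that[OF t2])
    fix t assume t: "t \<ge> t2"
    have p1: "\<tau> t \<ge> 1" and ud: "u t \<ge> \<delta>" and t0: "t > 0" using t2b[OF t] by auto
    have up: "u t > 0" using ud A(2) by simp
    have e2: "\<epsilon>^2/(\<tau> t)^2 \<le> \<epsilon>^2"
    proof -
      have "(\<tau> t)^2 \<ge> 1" using p1 by (simp add: one_le_power)
      then show ?thesis by (simp add: divide_le_eq mult_le_cancel_left1)
    qed
    have e3: "\<epsilon>^2/(\<tau> t)^2 \<ge> 0" by simp
    have "(u t)^2 - 4*\<kappa>*ln (\<tau> t) = 2 * En \<kappa> \<epsilon> (\<tau> t) (u t) - \<epsilon>^2/(\<tau> t)^2"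
      unfolding En_def by (simp add: field_simps)
    moreover have "En \<kappa> \<epsilon> (\<tau> t) (u t) \<le> E0" using En_le t0 by simp
    moreover note Elow[OF t]
    ultimately have "\<bar>(u t)^2 - 4*\<kappa>*ln (\<tau> t)\<bar> \<le> K" using e2 e3 unfolding K_def by linarith
    then show "\<tau> t \<ge> 1 \<and> u t > 0 \<and> \<bar>(u t)^2 - 4*\<kappa>*ln (\<tau> t)\<bar> \<le> K" using p1 up by simp
  qed
qed

end


lemma ln_sqrt_lim: "(\<kappa>::real) > 0 \<Longrightarrow> ((\<lambda>z. ln (sqrt (\<kappa>*z)) / z) \<longlongrightarrow> 0) at_top"
  by real_asymp

context asy begin

theorem asymp:
  shows "\<tau> \<sim>[at_top] (\<lambda>t. 2 * t * sqrt (\<kappa> * ln t))" "u \<sim>[at_top] (\<lambda>t. 2 * sqrt (\<kappa> * ln t))"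
proof -
  obtain t2 K where t2: "t2 > 0"
    and B: "\<And>t. t \<ge> t2 \<Longrightarrow> \<tau> t \<ge> 1 \<and> u t > 0 \<and> \<bar>(u t)^2 - 4*\<kappa>*ln (\<tau> t)\<bar> \<le> K"
    using u_bound by blast
  define y where "y t = ln (\<tau> t)" for t
  have ytop: "filterlim y at_top at_top" unfolding y_def[abs_def] by (rule filterlim_compose[OF ln_at_top tau_top])
  have ev: "eventually (\<lambda>t. t \<ge> t2 \<and> t > 1 \<and> y t \<ge> 1) at_top"
    using eventually_ge_at_top[of t2] eventually_gt_at_top[of 1] ytop[unfolded filterlim_at_top, rule_format, of 1]
    by eventually_elim auto
  have ky_top: "filterlim (\<lambda>t. c * y t) at_infinity at_top" if "c > 0" for c
    by (rule filterlim_at_top_imp_at_infinity[OF filterlim_tendsto_pos_mult_at_top[OF tendsto_const that ytop]])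
  define W where "W t = (u t)^2 / (4*\<kappa>*y t)" for t
  have W1: "(W \<longlongrightarrow> 1) at_top"
  proof -
    have lim0: "((\<lambda>t. K / (4*\<kappa>*y t)) \<longlongrightarrow> 0) at_top"
      by (rule tendsto_divide_0[OF tendsto_const]) (use ky_top[of "4*\<kappa>"] k in simp)
    have "((\<lambda>t. W t - 1) \<longlongrightarrow> 0) at_top"
    proof (rule Lim_null_comparison[OF _ lim0])
      show "eventually (\<lambda>t. norm (W t - 1) \<le> K / (4*\<kappa>*y t)) at_top"
        using ev
      proof eventually_elim
        case (elim t)
        have yp: "4*\<kappa>*y t > 0" using elim k by simp
        have "W t - 1 = ((u t)^2 - 4*\<kappa>*y t) / (4*\<kappa>*y t)" using yp k elim by (simp add: W_def diff_divide_distrib)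
        then have "norm (W t - 1) = \<bar>(u t)^2 - 4*\<kappa>*y t\<bar> / (4*\<kappa>*y t)" using yp by simp
        also have "\<dots> \<le> K / (4*\<kappa>*y t)" using B[of t] elim yp unfolding y_def by (intro divide_right_mono) auto
        finally show ?case .
      qed
    qed
    from tendsto_add[OF this tendsto_const[of 1]] show ?thesis by simp
  qed
  define r where "r t = sqrt (\<kappa> * y t)" for t
  define Q where "Q t = \<tau> t / (2 * r t)" for t
  define Q' where "Q' t = sqrt (W t) * (1 - 1/(2*y t))" for t
  have rpos: "r t > 0" if "y t \<ge> 1" for t using that k by (simp add: r_def)
  have r2: "(r t)^2 = \<kappa> * y t" if "y t \<ge> 1" for t using that k by (simp add: r_def)
  have sqW: "sqrt (W t) = u t / (2 * r t)" if "t \<ge> t2" "y t \<ge> 1" for t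
  proof (rule real_sqrt_unique)
    show "(u t / (2 * r t))^2 = W t" using r2[OF that(2)] rpos[OF that(2)]
      by (simp add: W_def power_divide field_simps power2_eq_square)
    show "0 \<le> u t / (2 * r t)" using B[OF that(1)] rpos[OF that(2)] by simp
  qed
  have dQ: "(Q has_real_derivative Q' t) (at t)" if "t \<ge> t2" "y t \<ge> 1" for t
  proof -
    have t0: "t > 0" using that t2 by simp
    have pt: "\<tau> t > 0" using B[OF that(1)] by simp
    have ky: "\<kappa> * ln (\<tau> t) > 0" using that k unfolding y_def by simp
    have dy: "((\<lambda>s. \<kappa> * ln (\<tau> s)) has_real_derivative \<kappa> * (inverse (\<tau> t) * u t)) (at t)"
      by (rule DERIV_cmult[OF DERIV_chain2[OF DERIV_ln[OF pt] d1[OF t0]], simplified])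
    have dr: "(r has_real_derivative (inverse (sqrt (\<kappa> * y t)) / 2) * (\<kappa> * (inverse (\<tau> t) * u t))) (at t)"
      unfolding r_def[abs_def] y_def using DERIV_chain2[OF DERIV_real_sqrt[OF ky] dy] by simp
    have dQ0: "(Q has_real_derivative (u t * (2 * r t) - \<tau> t * (2 * ((inverse (sqrt (\<kappa> * y t)) / 2) * (\<kappa> * (inverse (\<tau> t) * u t))))) / ((2 * r t) * (2 * r t))) (at t)"
      unfolding Q_def[abs_def]
      by (rule DERIV_divide[OF d1[OF t0] DERIV_cmult[OF dr]]) (use rpos[OF that(2)] in simp)
    have "(u t * (2 * r t) - \<tau> t * (2 * ((inverse (sqrt (\<kappa> * y t)) / 2) * (\<kappa> * (inverse (\<tau> t) * u t))))) / ((2 * r t) * (2 * r t))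
        = Q' t"
      unfolding Q'_def sqW[OF that] r_def[symmetric]
      using rpos[OF that(2)] r2[OF that(2)] pt k that(2)
      by (simp add: field_simps power2_eq_square)
    then show ?thesis using dQ0 by simp
  qed
  have Q'1: "(Q' \<longlongrightarrow> 1) at_top"
  proof -
    have "((\<lambda>t. 1 / (2 * y t)) \<longlongrightarrow> 0) at_top"
      by (rule tendsto_divide_0[OF tendsto_const]) (use ky_top[of 2] in simp)
    from tendsto_mult[OF tendsto_real_sqrt[OF W1] tendsto_diff[OF tendsto_const[of 1] this]]
    show ?thesis unfolding Q'_def[abs_def] by simp
  qed
  have Qt: "((\<lambda>t. Q t / t) \<longlongrightarrow> 1) at_top"
  proof (rule lhospital_at_top_at_top[where f'=Q' and g'="\<lambda>_. 1"])
    show "filterlim (\<lambda>x. x) at_top at_top" by (rule filterlim_ident)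
    show "eventually (\<lambda>x. (1::real) \<noteq> 0) at_top" by simp
    show "eventually (\<lambda>x. (Q has_real_derivative Q' x) (at x)) at_top"
      using ev by eventually_elim (auto intro: dQ)
    show "eventually (\<lambda>x. ((\<lambda>x. x) has_real_derivative 1) (at x)) at_top"
      by (simp add: DERIV_ident)
    show "((\<lambda>x. Q' x / 1) \<longlongrightarrow> 1) at_top" using Q'1 by simp
  qed
  have evQ: "eventually (\<lambda>t. t \<ge> t2 \<and> t > 1 \<and> y t \<ge> 1 \<and> Q t > 0) at_top"
    using ev
  proof eventually_elim
    case (elim t)
    then show ?case using B[of t] rpos[of t] by (auto simp: Q_def)
  qed
  have l1: "((\<lambda>t. ln (2 * Q t) / ln t) \<longlongrightarrow> 1) at_top"
  proof -
    have a: "((\<lambda>t. ln (2 * (Q t / t))) \<longlongrightarrow> ln (2 * 1)) at_top"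
      by (intro tendsto_intros Qt) simp
    have b: "((\<lambda>t. ln (2 * (Q t / t)) / ln t) \<longlongrightarrow> 0) at_top"
      by (rule tendsto_divide_0[OF a]) (rule filterlim_at_top_imp_at_infinity[OF ln_at_top])
    have c: "((\<lambda>t. ln (2 * (Q t / t)) / ln t + 1) \<longlongrightarrow> 1) at_top"
      using tendsto_add[OF b tendsto_const[of 1]] by simp
    show ?thesis
    proof (rule Lim_transform_eventually[OF c])
      show "eventually (\<lambda>t. ln (2 * (Q t / t)) / ln t + 1 = ln (2 * Q t) / ln t) at_top"
        using evQ
      proof eventually_elim
        case (elim t)
        have "ln (2 * Q t) = ln (2 * (Q t / t)) + ln t"
          using elim ln_mult[of "2 * Q t / t" t] by simp
        moreover have "ln t > 0" using elim by simp
        ultimately show ?case by (simp add: field_simps)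
      qed
    qed
  qed
  have l2: "((\<lambda>t. ln (2 * Q t) / y t) \<longlongrightarrow> 1) at_top"
  proof -
    have a: "((\<lambda>t. ln (r t) / y t) \<longlongrightarrow> 0) at_top"
      unfolding r_def by (rule filterlim_compose[OF ln_sqrt_lim[OF k] ytop])
    have c: "((\<lambda>t. 1 - ln (r t) / y t) \<longlongrightarrow> 1) at_top"
      using tendsto_diff[OF tendsto_const[of 1] a] by simp
    show ?thesis
    proof (rule Lim_transform_eventually[OF c])
      show "eventually (\<lambda>t. 1 - ln (r t) / y t = ln (2 * Q t) / y t) at_top"
        using evQ
      proof eventually_elim
        case (elim t)
        have rp: "r t > 0" using rpos elim by simp
        have "\<tau> t = (2 * Q t) * r t" using rp by (simp add: Q_def)
        then have "y t = ln (2 * Q t) + ln (r t)" unfolding y_def using elim rp by (simp add: ln_mult)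
        then show ?case using elim by (simp add: field_simps)
      qed
    qed
  qed
  have l3: "((\<lambda>t. y t / ln t) \<longlongrightarrow> 1) at_top"
  proof -
    have c: "((\<lambda>t. (ln (2 * Q t) / ln t) / (ln (2 * Q t) / y t)) \<longlongrightarrow> 1) at_top"
      by (rule tendsto_eq_rhs[OF tendsto_divide[OF l1 l2]]) simp_all
    have evp: "eventually (\<lambda>t. ln (2 * Q t) / y t > 1/2) at_top"
      using order_tendstoD(1)[OF l2, of "1/2"] by simp
    show ?thesis
    proof (rule Lim_transform_eventually[OF c])
      show "eventually (\<lambda>t. (ln (2 * Q t) / ln t) / (ln (2 * Q t) / y t) = y t / ln t) at_top"
        using evQ evp
      proof eventually_elim
        case (elim t)
        have yp: "y t > 0" using elim by simp
        have "ln (2 * Q t) > y t / 2" using elim yp by (simp add: field_simps)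
        then have "ln (2 * Q t) > 0" using yp by linarith
        then show ?case using elim by (simp add: field_simps)
      qed
    qed
  qed
  have s3: "((\<lambda>t. sqrt (y t / ln t)) \<longlongrightarrow> 1) at_top"
    using tendsto_real_sqrt[OF l3] by simp
  show "\<tau> \<sim>[at_top] (\<lambda>t. 2 * t * sqrt (\<kappa> * ln t))"
  proof (rule asymp_equivI')
    have c: "((\<lambda>t. (Q t / t) * sqrt (y t / ln t)) \<longlongrightarrow> 1) at_top"
      by (rule tendsto_eq_rhs[OF tendsto_mult[OF Qt s3]]) simp
    show "((\<lambda>t. \<tau> t / (2 * t * sqrt (\<kappa> * ln t))) \<longlongrightarrow> 1) at_top"
    proof (rule Lim_transform_eventually[OF c])
      show "eventually (\<lambda>t. (Q t / t) * sqrt (y t / ln t) = \<tau> t / (2 * t * sqrt (\<kappa> * ln t))) at_top"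
        using evQ
      proof eventually_elim
        case (elim t)
        have lt: "ln t > 0" using elim by simp
        have "sqrt (\<kappa> * ln t) = sqrt \<kappa> * sqrt (ln t)" by (simp add: real_sqrt_mult)
        moreover have "r t = sqrt \<kappa> * sqrt (y t)" by (simp add: r_def real_sqrt_mult)
        moreover have "sqrt (y t / ln t) = sqrt (y t) / sqrt (ln t)" by (simp add: real_sqrt_divide)
        moreover have "sqrt (y t) > 0" "sqrt (ln t) > 0" "sqrt \<kappa> > 0" using elim lt k by auto
        ultimately show ?case using elim by (simp add: Q_def field_simps)
      qed
    qed
  qed
  show "u \<sim>[at_top] (\<lambda>t. 2 * sqrt (\<kappa> * ln t))"
  proof (rule asymp_equivI')
    have c: "((\<lambda>t. sqrt (W t) * sqrt (y t / ln t)) \<longlongrightarrow> 1) at_top"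
      by (rule tendsto_eq_rhs[OF tendsto_mult[OF tendsto_real_sqrt[OF W1] s3]]) simp
    show "((\<lambda>t. u t / (2 * sqrt (\<kappa> * ln t))) \<longlongrightarrow> 1) at_top"
    proof (rule Lim_transform_eventually[OF c])
      show "eventually (\<lambda>t. sqrt (W t) * sqrt (y t / ln t) = u t / (2 * sqrt (\<kappa> * ln t))) at_top"
        using evQ
      proof eventually_elim
        case (elim t)
        have lt: "ln t > 0" using elim by simp
        have "sqrt (\<kappa> * ln t) = sqrt \<kappa> * sqrt (ln t)" by (simp add: real_sqrt_mult)
        moreover have "r t = sqrt \<kappa> * sqrt (y t)" by (simp add: r_def real_sqrt_mult)
        moreover have "sqrt (y t / ln t) = sqrt (y t) / sqrt (ln t)" by (simp add: real_sqrt_divide)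
        moreover have "sqrt (y t) > 0" "sqrt (ln t) > 0" "sqrt \<kappa> > 0" using elim lt k by auto
        ultimately have e: "sqrt (\<kappa> * ln t) = sqrt \<kappa> * sqrt (ln t)"
          "sqrt (y t / ln t) = sqrt (y t) / sqrt (ln t)"
          "sqrt (W t) = u t / (2 * (sqrt \<kappa> * sqrt (y t)))"
          "sqrt (y t) > 0" "sqrt (ln t) > 0" "sqrt \<kappa> > 0"
          using elim sqW[of t] by auto
        show ?case unfolding e(1-3) using e(4-6) by (simp add: field_simps)
      qed
    qed
  qed
qed

end


lemma within_at:
  assumes "t > 0" "(f has_real_derivative D) (at t within {0..})"
  shows "(f has_real_derivative D) (at t)"
proof -
  have "at t within {0..} = at t" by (rule at_within_interior) (use assms in simp)
  then show ?thesis using assms by simp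
qed

lemma ftc0:
  fixes f f' :: "real \<Rightarrow> real"
  assumes t: "t \<ge> 0" and d: "\<And>s. s \<ge> 0 \<Longrightarrow> (f has_real_derivative f' s) (at s within {0..})"
  shows "integral {0..t} f' = f t - f 0"
proof -
  have "(f' has_integral (f t - f 0)) {0..t}"
  proof (rule fundamental_theorem_of_calculus[OF t])
    fix x assume x: "x \<in> {0..t}"
    have "(f has_real_derivative f' x) (at x within {0..t})"
      by (rule has_field_derivative_subset[OF d]) (use x in auto)
    then show "(f has_vector_derivative f' x) (at x within {0..t})"
      by (simp add: has_real_derivative_iff_has_vector_derivative)
  qed
  then show ?thesis by (rule integral_unique)
qed

lemma psi_u_deriv:
  assumes m: "m > 0" and gt: "T t > m"
    and dT: "(T has_real_derivative U t) (at t within S)"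
    and dV: "(V has_real_derivative (2*\<kappa>*psi m (T t) + \<epsilon>^2 * (psi m (T t))^3)) (at t within S)"
    and U: "\<And>s. U s = V s + \<nu> * psi m (T s)"
  shows "(U has_real_derivative (2*\<kappa>/T t + \<epsilon>^2/(T t)^3 - \<nu> * U t/(T t)^2)) (at t within S)"
proof -
  have "((\<lambda>s. V s + \<nu> * psi m (T s)) has_real_derivative
      (2*\<kappa>*psi m (T t) + \<epsilon>^2 * (psi m (T t))^3) + \<nu> * (- (1 / (T t)^2) * U t)) (at t within S)"
    by (rule DERIV_add[OF dV DERIV_cmult[OF DERIV_chain2[OF psi_deriv[OF m gt] dT]]])
  moreover have "(\<lambda>s. V s + \<nu> * psi m (T s)) = U" using U by auto
  moreover have "psi m (T t) = 1 / T t" using gt by (simp add: psi_eq)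
  ultimately show ?thesis by (simp add: field_simps power3_eq_cube)
qed



lemma g_lip1:
  assumes m: "m > 0" and LL: "LL \<ge> 1" "LL \<ge> \<nu>/m^2" and nu: "\<nu> \<ge> 0"
  shows "\<bar>(b + \<nu> * psi m a) - (b' + \<nu> * psi m a')\<bar> \<le> LL * (\<bar>a - a'\<bar> + \<bar>b - b'\<bar>)"
proof -
  have "\<bar>(b + \<nu> * psi m a) - (b' + \<nu> * psi m a')\<bar> \<le> \<bar>b - b'\<bar> + \<nu> * \<bar>psi m a - psi m a'\<bar>"
  proof -
    have "(b + \<nu> * psi m a) - (b' + \<nu> * psi m a') = (b - b') + \<nu> * (psi m a - psi m a')"
      by (simp add: algebra_simps)
    then show ?thesis using abs_triangle_ineq[of "b - b'" "\<nu> * (psi m a - psi m a')"] nu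
      by (simp add: abs_mult)
  qed
  also have "\<dots> \<le> \<bar>b - b'\<bar> + \<nu> * (\<bar>a - a'\<bar> / m^2)"
    using psi_lip[OF m, of a a'] nu by (intro add_left_mono mult_left_mono) auto
  also have "\<dots> = \<bar>b - b'\<bar> + (\<nu>/m^2) * \<bar>a - a'\<bar>" by simp
  also have "\<dots> \<le> LL * \<bar>b - b'\<bar> + LL * \<bar>a - a'\<bar>"
  proof -
    have "\<bar>b - b'\<bar> \<le> LL * \<bar>b - b'\<bar>" using mult_right_mono[OF LL(1), of "\<bar>b - b'\<bar>"] by simp
    moreover have "(\<nu>/m^2) * \<bar>a - a'\<bar> \<le> LL * \<bar>a - a'\<bar>" using LL(2) by (intro mult_right_mono) auto
    ultimately show ?thesis by (rule add_mono)
  qed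
  finally show ?thesis by (simp add: algebra_simps)
qed

lemma g_lip2:
  assumes m: "m > 0" and LL: "LL \<ge> 2*\<kappa>/m^2 + 3*\<epsilon>^2/m^4" and k: "\<kappa> \<ge> 0"
  shows "\<bar>(2*\<kappa>*psi m a + \<epsilon>^2 * (psi m a)^3) - (2*\<kappa>*psi m a' + \<epsilon>^2 * (psi m a')^3)\<bar>
     \<le> LL * (\<bar>a - a'\<bar> + \<bar>b - b'\<bar>)"
proof -
  have p: "\<bar>psi m a - psi m a'\<bar> \<le> \<bar>a - a'\<bar> / m^2" by (rule psi_lip[OF m])
  have c: "\<bar>(psi m a)^3 - (psi m a')^3\<bar> \<le> 3*(1/m)^2 * \<bar>psi m a - psi m a'\<bar>"
    by (rule cube_lip) (use psi_pos[OF m] psi_le[OF m] less_imp_le in auto)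
  have "\<bar>(2*\<kappa>*psi m a + \<epsilon>^2 * (psi m a)^3) - (2*\<kappa>*psi m a' + \<epsilon>^2 * (psi m a')^3)\<bar>
      \<le> 2*\<kappa> * \<bar>psi m a - psi m a'\<bar> + \<epsilon>^2 * \<bar>(psi m a)^3 - (psi m a')^3\<bar>"
  proof -
    have "(2*\<kappa>*psi m a + \<epsilon>^2 * (psi m a)^3) - (2*\<kappa>*psi m a' + \<epsilon>^2 * (psi m a')^3)
        = 2*\<kappa> * (psi m a - psi m a') + \<epsilon>^2 * ((psi m a)^3 - (psi m a')^3)" by (simp add: algebra_simps)
    then show ?thesis
      using abs_triangle_ineq[of "2*\<kappa> * (psi m a - psi m a')" "\<epsilon>^2 * ((psi m a)^3 - (psi m a')^3)"] k
      by (simp add: abs_mult)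
  qed
  also have "\<dots> \<le> 2*\<kappa> * (\<bar>a - a'\<bar> / m^2) + \<epsilon>^2 * (3*(1/m)^2 * (\<bar>a - a'\<bar> / m^2))"
  proof -
    have "\<epsilon>^2 * \<bar>(psi m a)^3 - (psi m a')^3\<bar> \<le> \<epsilon>^2 * (3*(1/m)^2 * \<bar>psi m a - psi m a'\<bar>)"
      using c by (intro mult_left_mono) auto
    also have "\<dots> \<le> \<epsilon>^2 * (3*(1/m)^2 * (\<bar>a - a'\<bar> / m^2))"
      using p by (intro mult_left_mono) auto
    finally have e2: "\<epsilon>^2 * \<bar>(psi m a)^3 - (psi m a')^3\<bar> \<le> \<epsilon>^2 * (3*(1/m)^2 * (\<bar>a - a'\<bar> / m^2))" .
    have "2*\<kappa> * \<bar>psi m a - psi m a'\<bar> \<le> 2*\<kappa> * (\<bar>a - a'\<bar> / m^2)"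
      using p k by (intro mult_left_mono) auto
    then show ?thesis using e2 by (rule add_mono)
  qed
  also have "\<dots> = (2*\<kappa>/m^2 + 3*\<epsilon>^2/m^4) * \<bar>a - a'\<bar>" using m by (simp add: field_simps power2_eq_square power4_eq_xxxx)
  also have "\<dots> \<le> LL * \<bar>a - a'\<bar>" using LL by (intro mult_right_mono) auto
  also have "\<dots> \<le> LL * (\<bar>a - a'\<bar> + \<bar>b - b'\<bar>)"
  proof -
    have "2*\<kappa>/m^2 \<ge> 0" "3*\<epsilon>^2/m^4 \<ge> 0" using k m by auto
    then have "LL \<ge> 0" using LL by linarith
    then show ?thesis by (intro mult_left_mono) auto
  qed
  finally show ?thesis .
qed



theorem lemma3p2:
  fixes \<alpha> \<beta> \<kappa> \<epsilon> \<nu> :: real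
  assumes "\<alpha> > 0" "\<kappa> > 0" "\<epsilon> \<ge> 0" "\<nu> \<ge> 0"
  shows "\<exists>\<tau> \<tau>'. is_ivp_solution \<alpha> \<beta> \<kappa> \<epsilon> \<nu> \<tau> \<tau>' \<and>
           (\<forall>\<sigma> \<sigma>'. is_ivp_solution \<alpha> \<beta> \<kappa> \<epsilon> \<nu> \<sigma> \<sigma>' \<longrightarrow>
                (\<forall>t\<ge>0. \<sigma> t = \<tau> t \<and> \<sigma>' t = \<tau>' t)) \<and>
           \<tau> \<sim>[at_top] (\<lambda>t. 2 * t * sqrt (\<kappa> * ln t)) \<and>
           \<tau>' \<sim>[at_top] (\<lambda>t. 2 * sqrt (\<kappa> * ln t))"
proof -
  note a = assms(1) and k = assms(2) and e = assms(3) and nu = assms(4)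
  define E0 where "E0 = En \<kappa> \<epsilon> \<alpha> \<beta>"
  define c0 where "c0 = exp (- E0/(2*\<kappa>))"
  define m where "m = c0/2"
  have c0: "c0 > 0" by (simp add: c0_def)
  have m: "m > 0" "m < c0" using c0 by (auto simp: m_def)
  have c0a: "c0 \<le> \<alpha>"
  proof -
    have "- 2*\<kappa>*ln \<alpha> \<le> E0" unfolding E0_def En_def using a by simp
    then have "- E0/(2*\<kappa>) \<le> ln \<alpha>" using k by (simp add: field_simps)
    then have "c0 \<le> exp (ln \<alpha>)" unfolding c0_def by simp
    then show ?thesis using a by simp
  qed
  have ma: "m < \<alpha>" using m c0a by simp
  define g1 where "g1 a b = b + \<nu> * psi m a" for a b
  define g2 where "g2 a b = 2*\<kappa>*psi m a + \<epsilon>^2 * (psi m a)^3" for a b :: real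
  define LL where "LL = 1 + \<nu>/m^2 + (2*\<kappa>/m^2 + 3*\<epsilon>^2/m^4)"
  have LLs: "LL \<ge> 1" "LL \<ge> \<nu>/m^2" "LL \<ge> 2*\<kappa>/m^2 + 3*\<epsilon>^2/m^4"
  proof -
    have "\<nu>/m^2 \<ge> 0" "2*\<kappa>/m^2 + 3*\<epsilon>^2/m^4 \<ge> 0" using nu k m by auto
    then show "LL \<ge> 1" "LL \<ge> \<nu>/m^2" "LL \<ge> 2*\<kappa>/m^2 + 3*\<epsilon>^2/m^4" unfolding LL_def by linarith+
  qed
  have pic: "picard g1 g2 LL"
  proof
    show "LL \<ge> 0" using LLs by simp
    show "\<bar>g1 a b - g1 a' b'\<bar> \<le> LL * (\<bar>a - a'\<bar> + \<bar>b - b'\<bar>)" for a b a' b'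
      unfolding g1_def by (rule g_lip1[OF m(1) LLs(1,2) nu])
    show "\<bar>g2 a b - g2 a' b'\<bar> \<le> LL * (\<bar>a - a'\<bar> + \<bar>b - b'\<bar>)" for a b a' b'
      unfolding g2_def by (rule g_lip2[OF m(1) LLs(3)]) (use k in simp)
    show "continuous_on UNIV (\<lambda>z. g1 (fst z) (snd z))"
      unfolding g1_def by (intro continuous_intros psi_cont[OF m(1)])
    show "continuous_on UNIV (\<lambda>z. g2 (fst z) (snd z))"
      unfolding g2_def by (intro continuous_intros psi_cont[OF m(1)])
  qed
  interpret P: picard g1 g2 LL \<alpha> "\<beta> - \<nu>/\<alpha>" by (rule pic)
  define T0 where "T0 = P.XX"
  define V where "V = P.YY"
  have cT: "ctn T0" "ctn V" using P.XY_ctn by (auto simp: T0_def V_def)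
  have sol: "T0 t = \<alpha> + integral {0..t} (\<lambda>s. g1 (T0 s) (V s))"
    "V t = (\<beta> - \<nu>/\<alpha>) + integral {0..t} (\<lambda>s. g2 (T0 s) (V s))" if "t \<ge> 0" for t
    using P.XY_sol[OF that] by (auto simp: T0_def V_def)
  have dT: "(T0 has_real_derivative g1 (T0 t) (V t)) (at t within {0..})" if "t \<ge> 0" for t
    using deriv_int[where g="\<lambda>s. g1 (T0 s) (V s)", OF _ that sol(1)] P.ctn_f1[OF cT] unfolding ctn_def by blast
  have dV: "(V has_real_derivative g2 (T0 t) (V t)) (at t within {0..})" if "t \<ge> 0" for t
    using deriv_int[where g="\<lambda>s. g2 (T0 s) (V s)", OF _ that sol(2)] P.ctn_f2[OF cT] unfolding ctn_def by blast
  have T00: "T0 0 = \<alpha>" "V 0 = \<beta> - \<nu>/\<alpha>" using sol[of 0] by auto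
  define u where "u t = V t + \<nu> * psi m (T0 t)" for t
  have u0: "u 0 = \<beta>" using T00 ma a by (simp add: u_def psi_eq)
  have dTu: "(T0 has_real_derivative u t) (at t within {0..})" if "t \<ge> 0" for t
    using dT[OF that] by (simp add: u_def g1_def)
  have cT0: "continuous_on {0..} T0" by (rule DERIV_continuous_on[OF dTu]) simp
  have cV0: "continuous_on {0..} V" by (rule DERIV_continuous_on[OF dV]) simp
  have cu0: "continuous_on {0..} u" unfolding u_def[abs_def] by (intro continuous_intros cV0 psi_cont[OF m(1)] cT0)
  have du: "(u has_real_derivative (2*\<kappa>/T0 t + \<epsilon>^2/(T0 t)^3 - \<nu> * u t/(T0 t)^2)) (at t within S)"
    if "T0 t > m" "(T0 has_real_derivative u t) (at t within S)"
       "(V has_real_derivative g2 (T0 t) (V t)) (at t within S)" for t S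
    by (rule psi_u_deriv[where T=T0 and U=u and V=V and t=t, OF m(1) that(1,2)])
       (use that(3) in \<open>auto simp: g2_def u_def\<close>)
  have Tgt: "T0 t > m" if "t \<ge> 0" for t
  proof (rule ccontr)
    assume "\<not> T0 t > m"
    define S where "S = {0..} \<inter> T0 -` {..m}"
    have Sne: "S \<noteq> {}" using that \<open>\<not> T0 t > m\<close> by (auto simp: S_def)
    have Scl: "closed S" unfolding S_def by (rule continuous_closed_preimage[OF cT0]) auto
    have Sbd: "bdd_below S" unfolding S_def by (rule bdd_belowI[of _ 0]) auto
    define s where "s = Inf S"
    have sS: "s \<in> S" unfolding s_def by (rule closed_contains_Inf[OF Sne Sbd Scl])
    have s0: "s \<ge> 0" and Ts: "T0 s \<le> m" using sS by (auto simp: S_def)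
    have before: "T0 x > m" if "0 \<le> x" "x < s" for x
    proof (rule ccontr)
      assume "\<not> T0 x > m"
      then have "x \<in> S" using that by (auto simp: S_def)
      then have "s \<le> x" unfolding s_def by (rule cInf_lower[OF _ Sbd])
      then show False using that by simp
    qed
    have Tsm: "T0 s = m"
    proof -
      obtain x where x: "0 \<le> x" "x \<le> s" "T0 x = m"
        using IVT2'[of T0 s m 0] Ts T00 ma s0 continuous_on_subset[OF cT0, of "{0..s}"] by auto
      then have "x \<in> S" by (auto simp: S_def)
      then have "s \<le> x" unfolding s_def by (rule cInf_lower[OF _ Sbd])
      then show ?thesis using x by simp
    qed
    have "T0 s \<ge> exp (- En \<kappa> \<epsilon> (T0 0) (u 0) / (2*\<kappa>))"
    proof (rule energy_lower[OF s0 _ _ _ _ _ nu k])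
      show "continuous_on {0..s} T0" by (rule continuous_on_subset[OF cT0]) auto
      show "continuous_on {0..s} u" by (rule continuous_on_subset[OF cu0]) auto
      show "T0 x > 0" if "x \<in> {0..s}" for x
        using before[of x] Tsm m that by (cases "x < s") auto
      fix x assume x: "0 < x" "x < s"
      show "(T0 has_real_derivative u x) (at x)" using within_at[OF x(1) dTu] x by simp
      show "(u has_real_derivative (2*\<kappa>/T0 x + \<epsilon>^2/(T0 x)^3 - \<nu> * u x/(T0 x)^2)) (at x)"
        by (rule du) (use before[of x] x within_at[OF x(1) dTu] within_at[OF x(1) dV] in auto)
    qed
    then have "T0 s \<ge> c0" using T00 u0 by (simp add: c0_def E0_def)
    then show False using Tsm m by simp
  qed
  have Tpos: "T0 t > 0" if "t \<ge> 0" for t using Tgt[OF that] m by simp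
  have duw: "(u has_real_derivative (2*\<kappa>/T0 t + \<epsilon>^2/(T0 t)^3 - \<nu> * u t/(T0 t)^2)) (at t within {0..})"
    if "t \<ge> 0" for t by (rule du[OF Tgt[OF that] dTu[OF that] dV[OF that]])
  have sol_ex: "is_ivp_solution \<alpha> \<beta> \<kappa> \<epsilon> \<nu> T0 u"
    unfolding is_ivp_solution_def using T00 u0 Tpos dTu duw by force
  have uniq: "\<forall>t\<ge>0. \<sigma> t = T0 t \<and> \<sigma>' t = u t" if S: "is_ivp_solution \<alpha> \<beta> \<kappa> \<epsilon> \<nu> \<sigma> \<sigma>'" for \<sigma> \<sigma>'
  proof -
    have s0: "\<sigma> 0 = \<alpha>" "\<sigma>' 0 = \<beta>" and snz: "\<And>t. t \<ge> 0 \<Longrightarrow> \<sigma> t \<noteq> 0"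
      and ds: "\<And>t. t \<ge> 0 \<Longrightarrow> (\<sigma> has_real_derivative \<sigma>' t) (at t within {0..})"
      and ds': "\<And>t. t \<ge> 0 \<Longrightarrow> (\<sigma>' has_real_derivative
         (2 * \<kappa> / \<sigma> t + \<epsilon>^2 / (\<sigma> t)^3 - \<nu> * \<sigma>' t / (\<sigma> t)^2)) (at t within {0..})"
      using S unfolding is_ivp_solution_def by auto
    have cs: "continuous_on {0..} \<sigma>" by (rule DERIV_continuous_on[OF ds]) simp
    have cs': "continuous_on {0..} \<sigma>'" by (rule DERIV_continuous_on[OF ds']) simp
    have spos: "\<sigma> t > 0" if t0: "t \<ge> 0" for t
    proof (rule ccontr)
      assume "\<not> \<sigma> t > 0"
      then obtain x where "0 \<le> x" "x \<le> t" "\<sigma> x = 0"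
        using IVT2'[of \<sigma> t 0 0] s0 a t0 continuous_on_subset[OF cs, of "{0..t}"] by auto
      then show False using snz by auto
    qed
    have sgt: "\<sigma> t > m" if "t \<ge> 0" for t
    proof -
      have "\<sigma> t \<ge> exp (- En \<kappa> \<epsilon> (\<sigma> 0) (\<sigma>' 0) / (2*\<kappa>))"
      proof (rule energy_lower[OF that _ _ _ _ _ nu k])
        show "continuous_on {0..t} \<sigma>" by (rule continuous_on_subset[OF cs]) auto
        show "continuous_on {0..t} \<sigma>'" by (rule continuous_on_subset[OF cs']) auto
        show "\<sigma> x > 0" if "x \<in> {0..t}" for x using spos that by auto
        fix x assume x: "0 < x" "x < t"
        show "(\<sigma> has_real_derivative \<sigma>' x) (at x)" using within_at[OF x(1) ds] x by simp
        show "(\<sigma>' has_real_derivative (2*\<kappa>/\<sigma> x + \<epsilon>^2/(\<sigma> x)^3 - \<nu> * \<sigma>' x/(\<sigma> x)^2)) (at x)"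
          using within_at[OF x(1) ds'] x by simp
      qed
      then have "\<sigma> t \<ge> c0" using s0 by (simp add: c0_def E0_def)
      then show ?thesis using m by simp
    qed
    define W where "W t = \<sigma>' t - \<nu> / \<sigma> t" for t
    have dW: "(W has_real_derivative g2 (\<sigma> t) (W t)) (at t within {0..})" if "t \<ge> 0" for t
    proof -
      have st: "\<sigma> t \<noteq> 0" using spos[OF that] by simp
      have "((\<lambda>s. \<sigma>' s - \<nu> * inverse (\<sigma> s)) has_real_derivative
         (2 * \<kappa> / \<sigma> t + \<epsilon>^2 / (\<sigma> t)^3 - \<nu> * \<sigma>' t / (\<sigma> t)^2) - \<nu> * (- (inverse (\<sigma> t) * \<sigma>' t * inverse (\<sigma> t)))) (at t within {0..})"
        by (rule DERIV_diff[OF ds'[OF that] DERIV_cmult[OF DERIV_inverse'[OF ds[OF that] st]]])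
      moreover have "(\<lambda>s. \<sigma>' s - \<nu> * inverse (\<sigma> s)) = W" by (simp add: W_def[abs_def] divide_inverse)
      moreover have "(2 * \<kappa> / \<sigma> t + \<epsilon>^2 / (\<sigma> t)^3 - \<nu> * \<sigma>' t / (\<sigma> t)^2) - \<nu> * (- (inverse (\<sigma> t) * \<sigma>' t * inverse (\<sigma> t)))
          = g2 (\<sigma> t) (W t)"
        using st sgt[OF that] by (simp add: g2_def psi_eq field_simps power2_eq_square power3_eq_cube)
      ultimately show ?thesis by simp
    qed
    have cW: "continuous_on {0..} W" by (rule DERIV_continuous_on[OF dW]) simp
    have pp: "P.pctn (\<sigma>, W)" unfolding P.pctn_def ctn_def
      using continuous_on_subset[OF cs] continuous_on_subset[OF cW] by auto
    have pq: "P.pctn (T0, V)" unfolding P.pctn_def using cT by simp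
    have g1s: "g1 (\<sigma> s) (W s) = \<sigma>' s" if "s \<ge> 0" for s
      using sgt[OF that] m by (simp add: g1_def W_def psi_eq)
    have fp: "fst (\<sigma>, W) t = fst (P.pop (\<sigma>, W)) t \<and> snd (\<sigma>, W) t = snd (P.pop (\<sigma>, W)) t" if "t \<ge> 0" for t
    proof -
      have "integral {0..t} (\<lambda>s. g1 (\<sigma> s) (W s)) = integral {0..t} \<sigma>'"
        by (rule integral_cong) (use g1s in auto)
      also have "\<dots> = \<sigma> t - \<sigma> 0" by (rule ftc0[OF that ds])
      finally have 1: "\<sigma> t = \<alpha> + integral {0..t} (\<lambda>s. g1 (\<sigma> s) (W s))" using s0 by simp
      have "integral {0..t} (\<lambda>s. g2 (\<sigma> s) (W s)) = W t - W 0" by (rule ftc0[OF that dW])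
      moreover have "W 0 = \<beta> - \<nu>/\<alpha>" using s0 by (simp add: W_def)
      ultimately have 2: "W t = (\<beta> - \<nu>/\<alpha>) + integral {0..t} (\<lambda>s. g2 (\<sigma> s) (W s))" by simp
      show ?thesis using 1 2 by (simp add: P.pop_def)
    qed
    have fq: "fst (T0, V) t = fst (P.pop (T0, V)) t \<and> snd (T0, V) t = snd (P.pop (T0, V)) t" if "t \<ge> 0" for t
      using sol[OF that] by (simp add: P.pop_def)
    show ?thesis
    proof (intro allI impI)
      fix t :: real assume t: "t \<ge> 0"
      have "fst (\<sigma>, W) t = fst (T0, V) t \<and> snd (\<sigma>, W) t = snd (T0, V) t"
        by (rule P.uniq[OF pp pq fp fq t])
      then have "\<sigma> t = T0 t" "W t = V t" by auto
      moreover have "\<sigma>' t = W t + \<nu> * psi m (\<sigma> t)"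
        using sgt[OF t] m by (simp add: W_def psi_eq)
      ultimately show "\<sigma> t = T0 t \<and> \<sigma>' t = u t" by (simp add: u_def)
    qed
  qed
  interpret A: asy \<kappa> \<epsilon> \<nu> T0 u
  proof
    show "\<kappa> > 0" "\<epsilon> \<ge> 0" "\<nu> \<ge> 0" by (fact k e nu)+
    show "continuous_on {0..} T0" "continuous_on {0..} u" by (fact cT0 cu0)+
    show "t \<ge> 0 \<Longrightarrow> T0 t > 0" for t by (rule Tpos)
    show "t > 0 \<Longrightarrow> (T0 has_real_derivative u t) (at t)" for t using within_at dTu by simp
    show "t > 0 \<Longrightarrow> (u has_real_derivative (2*\<kappa>/T0 t + \<epsilon>^2/(T0 t)^3 - \<nu> * u t/(T0 t)^2)) (at t)" for t
      using within_at duw by simp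
  qed
  show ?thesis using sol_ex uniq A.asymp by blast
qed


end
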